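(* Let $F=P_{\ell_1}\cup\cdots\cup P_{\ell_k}$ be a linear forest with $\ell_1\ge\cdots\ge\ell_k\ge2$, $\ell_i\neq3$ for all $i$, and $F$ not of the form $kP_5$. Let $G$ be a graph containing disjoint vertex sets $X,Y$ with $|X|=\delta_F$ and $|Y|\ge |F|-\delta_F$ such that every vertex of $X$ is adjacent to every vertex of $Y$. Then $G$ contains $F$ as a subgraph provided one of the following holds: (a) some $\ell_i$ is even and $G-(X\cup Y)$ contains an edge $v_1v_2$ such that $v_1$ is adjacent to some vertex $x_1\in X$; (b) every $\ell_i$ is odd and $G-(X\cup Y)$ contains a path $v_1v_2v_3$ such that $v_1$ is adjacent to some vertex $x_1\in X$; (c) every $\ell_i$ is odd and $G-(X\cup Y)$ contains two vertex-disjoint edges $v_1v_2$, $v_3v_4$ such that $v_1x_1$ and $v_3x_2$ are edges of $G$ for some distinct $x_1,x_2\in X$.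
   Context: $P_m$ is the path on $m$ vertices; $kP_5$ denotes $k$ disjoint copies of $P_5$. $|F|=\sum\ell_i$ and $\delta_F=\sum_{i=1}^k\lfloor \ell_i/2\rfloor-1$. For $S\subseteq V(G)$, $G-S$ is the graph obtained by deleting the vertices of $S$. *)

theory Defs
  imports Main
begin

definition simple_graph :: "'a set \<Rightarrow> ('a \<Rightarrow> 'a \<Rightarrow> bool) \<Rightarrow> bool" where
  "simple_graph V E \<longleftrightarrow> finite V \<and> (\<forall>u v. E u v \<longrightarrow> E v u) \<and> (\<forall>u. \<not> E u u)
     \<and> (\<forall>u v. E u v \<longrightarrow> u \<in> V \<and> v \<in> V)"

text \<open>The linear forest P_{l_1} \<union> ... \<union> P_{l_k} given by the list ls = [l_1,...,l_k]:
  vertex (i,j) is the j-th vertex of the i-th path; edges (i,j)--(i,j+1).\<close>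
definition lf_verts :: "nat list \<Rightarrow> (nat \<times> nat) set" where
  "lf_verts ls = {(i, j). i < length ls \<and> j < ls ! i}"

definition contains_lf :: "'a set \<Rightarrow> ('a \<Rightarrow> 'a \<Rightarrow> bool) \<Rightarrow> nat list \<Rightarrow> bool" where
  "contains_lf V E ls \<longleftrightarrow> (\<exists>f. inj_on f (lf_verts ls) \<and> f ` lf_verts ls \<subseteq> V \<and>
      (\<forall>i j. i < length ls \<and> Suc j < ls ! i \<longrightarrow> E (f (i, j)) (f (i, Suc j))))"

definition lf_size :: "nat list \<Rightarrow> nat" where
  "lf_size ls = sum_list ls"

text \<open>\<delta>_F = sum of floor(l_i/2) minus 1 (nonnegative when all l_i \<ge> 2 and k \<ge> 1).\<close>
definition lf_delta :: "nat list \<Rightarrow> int" where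
  "lf_delta ls = int (sum_list (map (\<lambda>l. l div 2) ls)) - 1"

end

theory Submission
  imports Defs
begin


function il :: "'a list \<Rightarrow> 'a list \<Rightarrow> 'a list" where
  "il [] bs = []" | "il (a#as) bs = a # il bs as"
  by pat_completeness auto
termination by (relation "measure (\<lambda>(a,b). length a + length b)") auto

lemma il_len: "length as = length bs \<or> length as = Suc (length bs) \<Longrightarrow> length (il as bs) = length as + length bs"
  by (induction as bs rule: il.induct) auto

lemma il_set: "length as = length bs \<or> length as = Suc (length bs) \<Longrightarrow> set (il as bs) = set as \<union> set bs"
  by (induction as bs rule: il.induct) auto

lemma il_set_sub: "set (il as bs) \<subseteq> set as \<union> set bs"
  by (induction as bs rule: il.induct) auto

lemma il_distinct: "distinct as \<Longrightarrow> distinct bs \<Longrightarrow> set as \<inter> set bs = {} \<Longrightarrow> distinct (il as bs)"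
proof (induction as bs rule: il.induct)
  case (2 a as bs)
  then show ?case using il_set_sub[of bs as] by auto
qed auto

lemma il_succ: "set as \<subseteq> A \<Longrightarrow> set bs \<subseteq> B \<Longrightarrow> successively (\<lambda>u v. (u\<in>A\<and>v\<in>B)\<or>(u\<in>B\<and>v\<in>A)) (il as bs)"
proof (induction as bs arbitrary: A B rule: il.induct)
  case (2 a as bs)
  have s: "successively (\<lambda>u v. (u\<in>B\<and>v\<in>A)\<or>(u\<in>A\<and>v\<in>B)) (il bs as)"
    using 2 by auto
  have s2: "successively (\<lambda>u v. (u\<in>A\<and>v\<in>B)\<or>(u\<in>B\<and>v\<in>A)) (il bs as)"
    by (rule successively_mono[OF s]) auto
  show ?case
  proof (cases bs)
    case Nil then show ?thesis by simp
  next
    case (Cons b bs')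
    then show ?thesis using s2 2 by (auto simp: successively_Cons)
  qed
qed auto

lemma il_hd: "as \<noteq> [] \<Longrightarrow> hd (il as bs) = hd as"
  by (cases as) auto

lemma il_last_aux: "(length as = Suc (length bs) \<longrightarrow> last (il as bs) = last as) \<and>
   (length as = length bs \<and> bs \<noteq> [] \<longrightarrow> last (il as bs) = last bs)"
proof (induction as bs rule: il.induct)
  case (2 a as bs)
  show ?case
  proof (intro conjI impI)
    assume h: "length (a # as) = Suc (length bs)"
    show "last (il (a # as) bs) = last (a # as)"
    proof (cases "bs = []")
      case True then show ?thesis using h by auto
    next
      case False
      then have "as \<noteq> []" using h by auto
      then have "last (il bs as) = last as" using 2 h by auto
      moreover have "il bs as \<noteq> []" using False by (cases bs) auto
      ultimately show ?thesis using \<open>as \<noteq> []\<close> by simp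
    qed
  next
    assume h: "length (a # as) = length bs \<and> bs \<noteq> []"
    then have "last (il bs as) = last bs" using 2 by auto
    moreover have "il bs as \<noteq> []" using h by (cases bs) auto
    ultimately show "last (il (a # as) bs) = last bs" by simp
  qed
qed auto

lemma il_last: "length as = Suc (length bs) \<Longrightarrow> last (il as bs) = last as"
  using il_last_aux by blast

lemma pick: "finite A \<Longrightarrow> n \<le> card A \<Longrightarrow> \<exists>xs. distinct xs \<and> length xs = n \<and> set xs \<subseteq> A"
proof -
  assume "finite A" "n \<le> card A"
  obtain ys where "set ys = A" "distinct ys" using \<open>finite A\<close> finite_distinct_list by blast
  then show ?thesis using \<open>n \<le> card A\<close>
    by (intro exI[of _ "take n ys"]) (auto simp: distinct_card dest: in_set_takeD)
qed

lemma nested_inj: "distinct (concat ps) \<Longrightarrow> i < length ps \<Longrightarrow> i' < length ps \<Longrightarrow> j < length (ps!i) \<Longrightarrow>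
   j' < length (ps!i') \<Longrightarrow> ps!i!j = ps!i'!j' \<Longrightarrow> i = i' \<and> j = j'"
proof (induction ps arbitrary: i i')
  case (Cons p ps)
  have mix: False if "k < length ps" "jj < length (ps!k)" "jj' < length p" "ps!k!jj = p!jj'" for k jj jj'
  proof -
    have "ps!k \<in> set ps" using that by simp
    moreover have "ps!k!jj \<in> set (ps!k)" by (rule nth_mem, rule that(2))
    ultimately have "ps!k!jj \<in> set (concat ps)" by auto
    moreover have "p!jj' \<in> set p" using that by simp
    ultimately show False using Cons.prems(1) that(4) by auto
  qed
  show ?case
  proof (cases i)
    case 0
    show ?thesis
    proof (cases i')
      case 0 then show ?thesis using Cons.prems \<open>i = 0\<close> by (simp add: nth_eq_iff_index_eq)
    next
      case (Suc k)
      then show ?thesis using mix[of k j' j] Cons.prems \<open>i=0\<close> by simp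
    qed
  next
    case (Suc k)
    show ?thesis
    proof (cases i')
      case 0
      then show ?thesis using mix[of k j j'] Cons.prems \<open>i=Suc k\<close> by simp
    next
      case (Suc k')
      then show ?thesis using Cons.IH[of k k'] Cons.prems \<open>i = Suc k\<close> by auto
    qed
  qed
qed simp

lemma assemble:
  assumes "list_all2 (\<lambda>p l. length p = l) ps ls" "distinct (concat ps)" "set (concat ps) \<subseteq> V"
    "\<forall>p\<in>set ps. successively E p"
  shows "contains_lf V E ls"
proof -
  have len: "length ps = length ls" using list_all2_lengthD[OF assms(1)] .
  have ln: "length (ps!i) = ls!i" if "i < length ls" for i
    using list_all2_nthD[OF assms(1)] that len by simp
  define f where "f = (\<lambda>(i,j). ps!i!j)"
  have "inj_on f (lf_verts ls)"
  proof (rule inj_onI)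
    fix a b assume a: "a \<in> lf_verts ls" and b: "b \<in> lf_verts ls" and fab: "f a = f b"
    obtain i j where aij: "a = (i, j)" by (cases a)
    obtain i' j' where bij: "b = (i', j')" by (cases b)
    have h1: "i < length ls" "j < ls!i" using a aij unfolding lf_verts_def by auto
    have h2: "i' < length ls" "j' < ls!i'" using b bij unfolding lf_verts_def by auto
    have "ps!i!j = ps!i'!j'" using fab aij bij unfolding f_def by simp
    then have "i = i' \<and> j = j'"
      using nested_inj[OF assms(2), of i i' j j'] h1 h2 len ln[OF h1(1)] ln[OF h2(1)] by simp
    then show "a = b" using aij bij by simp
  qed
  moreover have "f ` lf_verts ls \<subseteq> V"
  proof
    fix v assume "v \<in> f ` lf_verts ls"
    then obtain i j where "i < length ls" "j < ls!i" "v = ps!i!j" unfolding lf_verts_def f_def by auto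
    note h = this
    have "ps!i \<in> set ps" using len h(1) by simp
    moreover have "v \<in> set (ps!i)" using h ln[of i] by simp
    ultimately have "v \<in> set (concat ps)" by auto
    then show "v \<in> V" using assms(3) by auto
  qed
  moreover have "\<forall>i j. i < length ls \<and> Suc j < ls ! i \<longrightarrow> E (f (i, j)) (f (i, Suc j))"
  proof (intro allI impI)
    fix i j assume h: "i < length ls \<and> Suc j < ls ! i"
    then have "ps!i \<in> set ps" using len by simp
    then have "successively E (ps!i)" using assms(4) by blast
    moreover have "Suc j < length (ps!i)" using h ln by simp
    ultimately show "E (f (i, j)) (f (i, Suc j))" unfolding f_def by (simp add: successively_nth)
  qed
  ultimately show ?thesis unfolding contains_lf_def by (intro exI[of _ f]) simp
qed

lemma std:
  assumes comp: "\<forall>x\<in>X. \<forall>y\<in>Y. E x y" and sym: "\<forall>u v. E u v \<longrightarrow> E v u"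
  shows "finite A \<Longrightarrow> finite B \<Longrightarrow> A \<subseteq> X \<Longrightarrow> B \<subseteq> Y \<Longrightarrow> A \<inter> B = {} \<Longrightarrow>
    sum_list (map (\<lambda>l. l div 2) ls) \<le> card A \<Longrightarrow> sum_list (map (\<lambda>l. l - l div 2) ls) \<le> card B \<Longrightarrow>
    \<exists>ps. list_all2 (\<lambda>p l. length p = l) ps ls \<and> distinct (concat ps) \<and> set (concat ps) \<subseteq> A \<union> B
       \<and> (\<forall>p\<in>set ps. successively E p)"
proof (induction ls arbitrary: A B)
  case Nil
  then show ?case by (intro exI[of _ "[]"]) auto
next
  case (Cons l ls)
  have eA: "sum_list (map (\<lambda>l. l div 2) (l # ls)) = l div 2 + sum_list (map (\<lambda>l. l div 2) ls)" by simp
  have eB: "sum_list (map (\<lambda>l. l - l div 2) (l # ls)) = (l - l div 2) + sum_list (map (\<lambda>l. l - l div 2) ls)"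
    by (simp only: list.map sum_list.Cons)
  have bA: "l div 2 \<le> card A" "sum_list (map (\<lambda>l. l div 2) ls) \<le> card A - l div 2"
    using Cons.prems(6) unfolding eA by linarith+
  have bB: "l - l div 2 \<le> card B" "sum_list (map (\<lambda>l. l - l div 2) ls) \<le> card B - (l - l div 2)"
    using Cons.prems(7) unfolding eB by linarith+
  obtain xs where xs: "distinct xs" "length xs = l div 2" "set xs \<subseteq> A"
    using pick[of A "l div 2"] Cons.prems(1) bA by auto
  obtain ys where ys: "distinct ys" "length ys = l - l div 2" "set ys \<subseteq> B"
    using pick[of B "l - l div 2"] Cons.prems(2) bB by auto
  have cA: "card (A - set xs) = card A - l div 2"
    using xs Cons.prems(1) by (simp add: card_Diff_subset distinct_card)
  have cB: "card (B - set ys) = card B - (l - l div 2)"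
    using ys Cons.prems(2) by (simp add: card_Diff_subset distinct_card)
  obtain ps where ps: "list_all2 (\<lambda>p l. length p = l) ps ls" "distinct (concat ps)"
     "set (concat ps) \<subseteq> (A - set xs) \<union> (B - set ys)" "\<forall>p\<in>set ps. successively E p"
  proof -
    have f1: "finite (A - set xs)" "finite (B - set ys)" using Cons.prems(1,2) by simp_all
    have f2: "A - set xs \<subseteq> X" "B - set ys \<subseteq> Y" using Cons.prems(3,4) by blast+
    have f3: "(A - set xs) \<inter> (B - set ys) = {}" using Cons.prems(5) by blast
    have f4: "sum_list (map (\<lambda>l. l div 2) ls) \<le> card (A - set xs)" using cA bA(2) by simp
    have f5: "sum_list (map (\<lambda>l. l - l div 2) ls) \<le> card (B - set ys)" using cB bB(2) by simp
    show ?thesis using Cons.IH[OF f1 f2 f3 f4 f5] that by blast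
  qed
  define p where "p = il ys xs"
  have "length ys = length xs \<or> length ys = Suc (length xs)" using xs(2) ys(2) by presburger
  then have lenp: "length p = l" unfolding p_def using xs(2) ys(2) il_len[of ys xs] by simp
  have setp: "set p \<subseteq> set ys \<union> set xs" unfolding p_def by (rule il_set_sub)
  have dp: "distinct p" unfolding p_def using xs ys Cons.prems(5) by (intro il_distinct) auto
  have sp0: "successively (\<lambda>u v. (u\<in>B\<and>v\<in>A)\<or>(u\<in>A\<and>v\<in>B)) p"
    unfolding p_def using xs ys by (intro il_succ) auto
  have sp: "successively E p"
  proof (rule successively_mono[OF sp0])
    fix u v assume h: "(u\<in>B\<and>v\<in>A)\<or>(u\<in>A\<and>v\<in>B)"
    show "E u v"
    proof (cases "u \<in> A")
      case True
      then have "v \<in> B" using h Cons.prems(5) by auto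
      then show ?thesis using True comp Cons.prems(3,4) by auto
    next
      case False
      then have "u \<in> B" "v \<in> A" using h by auto
      then have "E v u" using comp Cons.prems(3,4) by auto
      then show ?thesis using sym by auto
    qed
  qed
  have g1: "list_all2 (\<lambda>p l. length p = l) (p # ps) (l # ls)" using ps(1) lenp by simp
  have dj: "set p \<inter> set (concat ps) = {}" using setp ps(3) xs(3) ys(3) Cons.prems(5) by blast
  have g2: "distinct (concat (p # ps))" using dp ps(2) dj by simp
  have g3: "set (concat (p # ps)) \<subseteq> A \<union> B" using setp ps(3) xs(3) ys(3) by auto
  have g4: "\<forall>q\<in>set (p # ps). successively E q" using sp ps(4) by simp
  show ?case using g1 g2 g3 g4 by blast
qed



lemma il_succE:
  assumes comp: "\<forall>x\<in>X. \<forall>y\<in>Y. E x y" and sym: "\<forall>u v. E u v \<longrightarrow> E v u"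
    and disj: "X \<inter> Y = {}" and "set as \<subseteq> X" "set bs \<subseteq> Y"
  shows "successively E (il as bs)"
proof (rule successively_mono[OF il_succ[OF assms(4,5)]])
  fix u v assume h: "(u\<in>X\<and>v\<in>Y)\<or>(u\<in>Y\<and>v\<in>X)"
  show "E u v"
  proof (cases "u \<in> X")
    case True
    then have "v \<in> Y" using h disj by auto
    then show ?thesis using True comp by auto
  next
    case False
    then have "u \<in> Y" "v \<in> X" using h by auto
    then have "E v u" using comp by auto
    then show ?thesis using sym by auto
  qed
qed

lemma path_a:
  assumes comp: "\<forall>x\<in>X. \<forall>y\<in>Y. E x y" and sym: "\<forall>u v. E u v \<longrightarrow> E v u"
    and XV: "X \<subseteq> V" and YV: "Y \<subseteq> V" and disj: "X \<inter> Y = {}" and finX: "finite X" and finY: "finite Y"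
    and v: "v1 \<in> V - (X \<union> Y)" "v2 \<in> V - (X \<union> Y)" "v1 \<noteq> v2" "E v1 v2" "x1 \<in> X" "E v1 x1"
    and l: "even l" "l \<ge> 2" "l div 2 \<le> card X + 1" "l div 2 \<le> card Y"
  shows "\<exists>p0. length p0 = l \<and> distinct p0 \<and> set p0 \<subseteq> V \<and> successively E p0 \<and>
     card (set p0 \<inter> X) + 1 \<le> l div 2 \<and> card (set p0 \<inter> Y) \<le> l - l div 2"
proof (cases "l = 2")
  case True
  have "set [v2, v1] \<inter> X = {}" "set [v2, v1] \<inter> Y = {}" using v by auto
  then show ?thesis using True v sym by (intro exI[of _ "[v2,v1]"]) auto
next
  case False
  define h where "h = l div 2 - 1"
  have h1: "h \<ge> 1" using False l unfolding h_def by presburger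
  have "card (X - {x1}) = card X - 1" using v finX by simp
  then have "h - 1 \<le> card (X - {x1})" using l unfolding h_def by linarith
  then obtain xs where xs: "distinct xs" "length xs = h - 1" "set xs \<subseteq> X - {x1}"
    using pick[of "X - {x1}" "h - 1"] finX by auto
  have "h \<le> card Y" using l unfolding h_def by linarith
  then obtain ys where ys: "distinct ys" "length ys = h" "set ys \<subseteq> Y"
    using pick[of Y h] finY by auto
  define q where "q = il (x1 # xs) ys"
  have lq: "length q = 2 * h" unfolding q_def using xs ys h1 by (subst il_len) auto
  have sq: "set q = insert x1 (set xs) \<union> set ys" unfolding q_def using xs ys h1 by (subst il_set) auto
  have dq: "distinct q" unfolding q_def using xs ys disj v by (intro il_distinct) auto
  have succq: "successively E q" unfolding q_def using xs ys disj v
    by (intro il_succE[OF comp sym disj]) auto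
  have hq: "hd q = x1" unfolding q_def by simp
  have qne: "q \<noteq> []" using lq h1 by auto
  define p0 where "p0 = [v2, v1] @ q"
  have "length p0 = l" unfolding p0_def using lq l unfolding h_def by simp presburger
  moreover have "distinct p0" unfolding p0_def using dq sq v xs ys by auto
  moreover have "set p0 \<subseteq> V" unfolding p0_def using sq v xs ys XV YV by auto
  moreover have "successively E p0" unfolding p0_def using succq hq v sym qne
    by (auto simp: successively_append_iff successively_Cons)
  moreover have "set p0 \<inter> X = insert x1 (set xs)" unfolding p0_def using sq v xs ys disj by auto
  moreover have "set p0 \<inter> Y = set ys" unfolding p0_def using sq v xs ys disj by auto
  moreover have "card (insert x1 (set xs)) = h"
  proof -
    have "x1 \<notin> set xs" using xs by auto
    then show ?thesis using distinct_card[OF xs(1)] xs(2) h1 by simp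
  qed
  moreover have "card (set ys) = h" using ys by (simp add: distinct_card)
  moreover have "h + 1 \<le> l div 2" "h \<le> l - l div 2" using h1 unfolding h_def by presburger+
  ultimately show ?thesis by (intro exI[of _ p0]) auto
qed

lemma path_b:
  assumes comp: "\<forall>x\<in>X. \<forall>y\<in>Y. E x y" and sym: "\<forall>u v. E u v \<longrightarrow> E v u"
    and XV: "X \<subseteq> V" and YV: "Y \<subseteq> V" and disj: "X \<inter> Y = {}" and finX: "finite X" and finY: "finite Y"
    and v: "v1 \<in> V - (X \<union> Y)" "v2 \<in> V - (X \<union> Y)" "v3 \<in> V - (X \<union> Y)" "distinct [v1, v2, v3]"
       "E v1 v2" "E v2 v3" "x1 \<in> X" "E v1 x1"
    and l: "odd l" "l \<ge> 5" "l div 2 \<le> card X + 1" "l div 2 \<le> card Y"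
  shows "\<exists>p0. length p0 = l \<and> distinct p0 \<and> set p0 \<subseteq> V \<and> successively E p0 \<and>
     card (set p0 \<inter> X) + 1 \<le> l div 2 \<and> card (set p0 \<inter> Y) \<le> l - l div 2"
proof -
  define h where "h = l div 2 - 1"
  have h1: "h \<ge> 1" using l unfolding h_def by presburger
  have "card (X - {x1}) = card X - 1" using v finX by simp
  then have "h - 1 \<le> card (X - {x1})" using l unfolding h_def by linarith
  then obtain xs where xs: "distinct xs" "length xs = h - 1" "set xs \<subseteq> X - {x1}"
    using pick[of "X - {x1}" "h - 1"] finX by auto
  have "h \<le> card Y" using l unfolding h_def by linarith
  then obtain ys where ys: "distinct ys" "length ys = h" "set ys \<subseteq> Y"
    using pick[of Y h] finY by auto
  define q where "q = il (x1 # xs) ys"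
  have lq: "length q = 2 * h" unfolding q_def using xs ys h1 by (subst il_len) auto
  have sq: "set q = insert x1 (set xs) \<union> set ys" unfolding q_def using xs ys h1 by (subst il_set) auto
  have dq: "distinct q" unfolding q_def using xs ys disj v by (intro il_distinct) auto
  have succq: "successively E q" unfolding q_def using xs ys disj v
    by (intro il_succE[OF comp sym disj]) auto
  have hq: "hd q = x1" unfolding q_def by simp
  have qne: "q \<noteq> []" using lq h1 by auto
  define p0 where "p0 = [v3, v2, v1] @ q"
  have "length p0 = l" unfolding p0_def using lq l unfolding h_def by simp presburger
  moreover have "distinct p0" unfolding p0_def using dq sq v xs ys by auto
  moreover have "set p0 \<subseteq> V" unfolding p0_def using sq v xs ys XV YV by auto
  moreover have "successively E p0" unfolding p0_def using succq hq v sym qne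
    by (auto simp: successively_append_iff successively_Cons)
  moreover have "set p0 \<inter> X = insert x1 (set xs)" unfolding p0_def using sq v xs ys disj by auto
  moreover have "set p0 \<inter> Y = set ys" unfolding p0_def using sq v xs ys disj by auto
  moreover have "card (insert x1 (set xs)) = h"
  proof -
    have "x1 \<notin> set xs" using xs by auto
    then show ?thesis using distinct_card[OF xs(1)] xs(2) h1 by simp
  qed
  moreover have "card (set ys) = h" using ys by (simp add: distinct_card)
  moreover have "h + 1 \<le> l div 2" "h \<le> l - l div 2" using h1 unfolding h_def by presburger+
  ultimately show ?thesis by (intro exI[of _ p0]) auto
qed

lemma path_c:
  assumes comp: "\<forall>x\<in>X. \<forall>y\<in>Y. E x y" and sym: "\<forall>u v. E u v \<longrightarrow> E v u"
    and XV: "X \<subseteq> V" and YV: "Y \<subseteq> V" and disj: "X \<inter> Y = {}" and finX: "finite X" and finY: "finite Y"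
    and v: "v1 \<in> V - (X \<union> Y)" "v2 \<in> V - (X \<union> Y)" "v3 \<in> V - (X \<union> Y)" "v4 \<in> V - (X \<union> Y)"
       "distinct [v1, v2, v3, v4]"
       "E v1 v2" "E v3 v4" "x1 \<in> X" "x2 \<in> X" "x1 \<noteq> x2" "E v1 x1" "E v3 x2"
    and l: "odd l" "l \<ge> 7" "l div 2 \<le> card X + 1" "l div 2 \<le> card Y"
  shows "\<exists>p0. length p0 = l \<and> distinct p0 \<and> set p0 \<subseteq> V \<and> successively E p0 \<and>
     card (set p0 \<inter> X) + 1 \<le> l div 2 \<and> card (set p0 \<inter> Y) \<le> l - l div 2"
proof -
  define m where "m = l div 2 - 2"
  have m1: "m \<ge> 1" using l unfolding m_def by presburger
  have "card (X - {x1, x2}) = card X - 2" using v finX by (simp add: card_Diff_subset)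
  then have "m - 1 \<le> card (X - {x1, x2})" using l unfolding m_def by linarith
  then obtain xs where xs: "distinct xs" "length xs = m - 1" "set xs \<subseteq> X - {x1, x2}"
    using pick[of "X - {x1, x2}" "m - 1"] finX by auto
  have "m \<le> card Y" using l unfolding m_def by linarith
  then obtain ys where ys: "distinct ys" "length ys = m" "set ys \<subseteq> Y"
    using pick[of Y m] finY by auto
  define xs' where "xs' = x1 # xs @ [x2]"
  have lx': "length xs' = Suc (length ys)" unfolding xs'_def using xs ys m1 by simp
  have dx': "distinct xs'" unfolding xs'_def using xs v by auto
  have sx': "set xs' \<subseteq> X" unfolding xs'_def using xs v by auto
  define q where "q = il xs' ys"
  have lq: "length q = 2 * m + 1" unfolding q_def using lx' ys by (subst il_len) auto
  have sq: "set q = set xs' \<union> set ys" unfolding q_def using lx' by (subst il_set) auto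
  have dq: "distinct q" unfolding q_def using dx' sx' ys disj by (intro il_distinct) auto
  have succq: "successively E q" unfolding q_def using sx' ys disj
    by (intro il_succE[OF comp sym disj]) auto
  have hq: "hd q = x1" unfolding q_def xs'_def by simp
  have lastq: "last q = x2" unfolding q_def using il_last[OF lx'] xs'_def by simp
  have qne: "q \<noteq> []" using lq by auto
  define p0 where "p0 = ([v2, v1] @ q) @ [v3, v4]"
  have "length p0 = l" unfolding p0_def using lq l unfolding m_def by simp presburger
  moreover have "distinct p0" unfolding p0_def using dq sq sx' v ys by auto
  moreover have "set p0 \<subseteq> V" unfolding p0_def using sq sx' v ys XV YV by auto
  moreover have "successively E p0"
  proof -
    have a: "successively E ([v2, v1] @ q)" using succq hq qne v sym
      by (auto simp: successively_append_iff successively_Cons)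
    have la: "last ([v2, v1] @ q) = x2" using lastq qne by simp
    have e: "E x2 v3" using v sym by blast
    show ?thesis unfolding p0_def successively_append_iff[of E "[v2, v1] @ q" "[v3, v4]"]
      using a la e v by simp
  qed
  moreover have "set p0 \<inter> X = set xs'" unfolding p0_def using sq sx' v ys disj by auto
  moreover have "set p0 \<inter> Y = set ys" unfolding p0_def using sq sx' v ys disj by auto
  moreover have "card (set xs') = m + 1" using dx' lx' ys by (simp add: distinct_card)
  moreover have "card (set ys) = m" using ys by (simp add: distinct_card)
  moreover have "m + 2 \<le> l div 2" "m \<le> l - l div 2" using m1 unfolding m_def by presburger+
  ultimately show ?thesis by (intro exI[of _ p0]) auto
qed



lemma sum_split: "sum_list (ls::nat list) = sum_list (map (\<lambda>l. l div 2) ls) + sum_list (map (\<lambda>l. l - l div 2) ls)"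
  by (induction ls) auto

theorem mainTheorem6:
  fixes V :: "'a set" and E :: "'a \<Rightarrow> 'a \<Rightarrow> bool" and ls :: "nat list"
    and X Y :: "'a set"
  assumes G: "simple_graph V E"
    and nonempty: "ls \<noteq> []"
    and sorted: "sorted_wrt (\<ge>) ls"
    and ge2: "\<forall>l\<in>set ls. l \<ge> 2"
    and ne3: "\<forall>l\<in>set ls. l \<noteq> 3"
    and not_kP5: "\<not> (\<forall>l\<in>set ls. l = 5)"
    and XV: "X \<subseteq> V" and YV: "Y \<subseteq> V" and disj: "X \<inter> Y = {}"
    and cardX: "int (card X) = lf_delta ls"
    and cardY: "int (card Y) \<ge> int (lf_size ls) - lf_delta ls"
    and complete: "\<forall>x\<in>X. \<forall>y\<in>Y. E x y"
    and cond: "((\<exists>l\<in>set ls. even l) \<and>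
                 (\<exists>v1 v2 x1. v1 \<in> V - (X \<union> Y) \<and> v2 \<in> V - (X \<union> Y) \<and> E v1 v2 \<and>
                    x1 \<in> X \<and> E v1 x1))
            \<or> ((\<forall>l\<in>set ls. odd l) \<and>
                 (\<exists>v1 v2 v3 x1. v1 \<in> V - (X \<union> Y) \<and> v2 \<in> V - (X \<union> Y) \<and> v3 \<in> V - (X \<union> Y) \<and>
                    distinct [v1, v2, v3] \<and> E v1 v2 \<and> E v2 v3 \<and> x1 \<in> X \<and> E v1 x1))
            \<or> ((\<forall>l\<in>set ls. odd l) \<and>
                 (\<exists>v1 v2 v3 v4 x1 x2. v1 \<in> V - (X \<union> Y) \<and> v2 \<in> V - (X \<union> Y) \<and>
                    v3 \<in> V - (X \<union> Y) \<and> v4 \<in> V - (X \<union> Y) \<and> distinct [v1, v2, v3, v4] \<and>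
                    E v1 v2 \<and> E v3 v4 \<and> x1 \<in> X \<and> x2 \<in> X \<and> x1 \<noteq> x2 \<and> E v1 x1 \<and> E v3 x2))"
  shows "contains_lf V E ls"
proof -
  have finV: "finite V" and sym: "\<forall>u v. E u v \<longrightarrow> E v u" and irr: "\<forall>u. \<not> E u u"
    using G unfolding simple_graph_def by auto
  have finX: "finite X" and finY: "finite Y" using finV XV YV finite_subset by auto
  define D where "D = sum_list (map (\<lambda>l. l div 2) ls)"
  define C where "C = sum_list (map (\<lambda>l. l - l div 2) ls)"
  have memD: "l div 2 \<le> D" if "l \<in> set ls" for l
    unfolding D_def using that by (intro member_le_sum_list) auto
  have memC: "l - l div 2 \<le> C" if "l \<in> set ls" for l
    unfolding C_def using that by (intro member_le_sum_list) auto
  have "hd ls \<in> set ls" using nonempty by simp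
  then have D1: "D \<ge> 1" using memD ge2 by (metis div_le_mono le_trans one_le_numeral div_self zero_neq_numeral)
  have cX: "card X + 1 = D" using cardX D1 unfolding lf_delta_def D_def by linarith
  have cY: "C + 1 \<le> card Y" using cardY cardX sum_split[of ls]
    unfolding lf_delta_def lf_size_def D_def C_def by linarith
  have "\<exists>l\<in>set ls. \<exists>p0. length p0 = l \<and> distinct p0 \<and> set p0 \<subseteq> V \<and> successively E p0 \<and>
     card (set p0 \<inter> X) + 1 \<le> l div 2 \<and> card (set p0 \<inter> Y) \<le> l - l div 2"
  proof -
    consider (a) "(\<exists>l\<in>set ls. even l) \<and>
                 (\<exists>v1 v2 x1. v1 \<in> V - (X \<union> Y) \<and> v2 \<in> V - (X \<union> Y) \<and> E v1 v2 \<and>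
                    x1 \<in> X \<and> E v1 x1)"
      | (b) "(\<forall>l\<in>set ls. odd l) \<and>
                 (\<exists>v1 v2 v3 x1. v1 \<in> V - (X \<union> Y) \<and> v2 \<in> V - (X \<union> Y) \<and> v3 \<in> V - (X \<union> Y) \<and>
                    distinct [v1, v2, v3] \<and> E v1 v2 \<and> E v2 v3 \<and> x1 \<in> X \<and> E v1 x1)"
      | (c) "(\<forall>l\<in>set ls. odd l) \<and>
                 (\<exists>v1 v2 v3 v4 x1 x2. v1 \<in> V - (X \<union> Y) \<and> v2 \<in> V - (X \<union> Y) \<and>
                    v3 \<in> V - (X \<union> Y) \<and> v4 \<in> V - (X \<union> Y) \<and> distinct [v1, v2, v3, v4] \<and>
                    E v1 v2 \<and> E v3 v4 \<and> x1 \<in> X \<and> x2 \<in> X \<and> x1 \<noteq> x2 \<and> E v1 x1 \<and> E v3 x2)"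
      using cond by blast
    then show ?thesis
    proof cases
      case a
      then obtain l v1 v2 x1 where l: "l \<in> set ls" "even l" and
        v: "v1 \<in> V - (X \<union> Y)" "v2 \<in> V - (X \<union> Y)" "E v1 v2" "x1 \<in> X" "E v1 x1" by blast
      have "v1 \<noteq> v2" using v irr by auto
      moreover have "l \<ge> 2" "l div 2 \<le> card X + 1" "l div 2 \<le> card Y"
        using ge2 l memD[OF l(1)] memC[OF l(1)] cX cY by auto
      ultimately show ?thesis using path_a[OF complete sym XV YV disj finX finY v(1,2) _ v(3-5) l(2)] l(1)
        by blast
    next
      case b
      then obtain v1 v2 v3 x1 where odd: "\<forall>l\<in>set ls. odd l" and
        v: "v1 \<in> V - (X \<union> Y)" "v2 \<in> V - (X \<union> Y)" "v3 \<in> V - (X \<union> Y)"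
                    "distinct [v1, v2, v3]" "E v1 v2" "E v2 v3" "x1 \<in> X" "E v1 x1" by blast
      define l where "l = hd ls"
      have l: "l \<in> set ls" using nonempty unfolding l_def by simp
      have "odd l" "l \<ge> 2" "l \<noteq> 3" using odd ge2 ne3 l by auto
      then have "l \<ge> 5" by presburger
      moreover have "l div 2 \<le> card X + 1" "l div 2 \<le> card Y"
        using memD[OF l] memC[OF l] cX cY by auto
      ultimately show ?thesis using path_b[OF complete sym XV YV disj finX finY v] l \<open>odd l\<close>
        by blast
    next
      case c
      have odd: "\<forall>l\<in>set ls. odd l" using c by (rule conjunct1)
      from c[THEN conjunct2] obtain v1 v2 v3 v4 x1 x2 where vv: "v1 \<in> V - (X \<union> Y) \<and> v2 \<in> V - (X \<union> Y) \<and>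
                    v3 \<in> V - (X \<union> Y) \<and> v4 \<in> V - (X \<union> Y) \<and> distinct [v1, v2, v3, v4] \<and>
                    E v1 v2 \<and> E v3 v4 \<and> x1 \<in> X \<and> x2 \<in> X \<and> x1 \<noteq> x2 \<and> E v1 x1 \<and> E v3 x2"
        by (elim exE) (rule that)
      have v: "v1 \<in> V - (X \<union> Y)" "v2 \<in> V - (X \<union> Y)" "v3 \<in> V - (X \<union> Y)" "v4 \<in> V - (X \<union> Y)"
           "distinct [v1, v2, v3, v4]"
           "E v1 v2" "E v3 v4" "x1 \<in> X" "x2 \<in> X" "x1 \<noteq> x2" "E v1 x1" "E v3 x2"
        using vv by auto
      obtain l where l: "l \<in> set ls" "l \<noteq> 5" using not_kP5 by blast
      have "odd l" "l \<ge> 2" "l \<noteq> 3" using odd ge2 ne3 l by auto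
      then have l7: "l \<ge> 7" using l(2) by presburger
      have "l div 2 \<le> card X + 1" "l div 2 \<le> card Y"
        using memD[OF l(1)] memC[OF l(1)] cX cY by auto
      from path_c[OF complete sym XV YV disj finX finY v \<open>odd l\<close> l7 this]
      show ?thesis by (rule bexI[OF _ l(1)])
    qed
  qed
  then obtain i0 p0 where i0: "i0 < length ls" and p0: "length p0 = ls!i0" "distinct p0" "set p0 \<subseteq> V"
    "successively E p0" "card (set p0 \<inter> X) + 1 \<le> ls!i0 div 2" "card (set p0 \<inter> Y) \<le> ls!i0 - ls!i0 div 2"
    by (metis in_set_conv_nth)
  define l where "l = ls!i0"
  define ls' where "ls' = take i0 ls @ drop (Suc i0) ls"
  have e: "take i0 ls @ ls!i0 # drop (Suc i0) ls = ls" using id_take_nth_drop[OF i0] by simp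
  have sf: "sum_list (map f ls) = f l + sum_list (map f ls')" for f :: "nat \<Rightarrow> nat"
  proof -
    have "sum_list (map f (take i0 ls @ ls!i0 # drop (Suc i0) ls)) = f l + sum_list (map f ls')"
      by (simp add: ls'_def l_def)
    then show ?thesis unfolding e .
  qed
  define A where "A = X - set p0"
  define B where "B = Y - set p0"
  have cA: "card A = card X - card (set p0 \<inter> X)" unfolding A_def using finX
    by (simp add: card_Diff_subset_Int Int_commute)
  have cB: "card B = card Y - card (set p0 \<inter> Y)" unfolding B_def using finY
    by (simp add: card_Diff_subset_Int Int_commute)
  have bA: "sum_list (map (\<lambda>l. l div 2) ls') \<le> card A"
    using sf[of "\<lambda>l. l div 2"] cA cX p0(5) unfolding D_def l_def by linarith
  have bB: "sum_list (map (\<lambda>l. l - l div 2) ls') \<le> card B"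
    using sf[of "\<lambda>l. l - l div 2"] cB cY p0(6) unfolding C_def l_def by linarith
  obtain ps' where ps': "list_all2 (\<lambda>p l. length p = l) ps' ls'" "distinct (concat ps')"
    "set (concat ps') \<subseteq> A \<union> B" "\<forall>p\<in>set ps'. successively E p"
    using std[OF complete sym, of A B ls'] finX finY bA bB disj unfolding A_def B_def by auto
  define ps where "ps = take i0 ps' @ p0 # drop i0 ps'"
  have lt: "take i0 ls' = take i0 ls" "drop i0 ls' = drop (Suc i0) ls" unfolding ls'_def using i0 by auto
  have "list_all2 (\<lambda>p l. length p = l) ps (take i0 ls @ ls!i0 # drop (Suc i0) ls)"
    unfolding ps_def
    using list_all2_takeI[OF ps'(1), of i0] list_all2_dropI[OF ps'(1), of i0] p0(1) lt
    by (intro list_all2_appendI) auto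
  then have la: "list_all2 (\<lambda>p l. length p = l) ps ls" unfolding e .
  have cc: "concat ps = concat (take i0 ps') @ p0 @ concat (drop i0 ps')" unfolding ps_def by simp
  have cc': "concat (take i0 ps') @ concat (drop i0 ps') = concat ps'"
    by (metis append_take_drop_id concat_append)
  have disj0: "set p0 \<inter> set (concat ps') = {}" using ps'(3) unfolding A_def B_def by auto
  have "distinct (concat ps)" unfolding cc using ps'(2) p0(2) disj0 unfolding cc'[symmetric]
    by auto
  moreover have "set (concat ps) \<subseteq> V" unfolding cc using ps'(3) p0(3) XV YV unfolding cc'[symmetric] A_def B_def
    by auto
  moreover have "\<forall>p\<in>set ps. successively E p" unfolding ps_def using ps'(4) p0(4)
    by (auto dest: in_set_takeD in_set_dropD)
  ultimately show ?thesis using assemble la by blast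
qed

end
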